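(* Let $X_1,X_2,X_3,Y_1,Y_2,Y_3$ be independent real variables ranging over the open positive orthant $(0,\infty)^6$, and consider the first-order linear system of partial differential equations for an unknown smooth function $\tau=\tau(X_1,X_2,X_3,Y_1,Y_2,Y_3)$, writing $\partial_{X_i}=\partial/\partial X_i$, $\partial_{Y_i}=\partial/\partial Y_i$: $$\Big(2\sum_{i=1}^3 X_i\partial_{X_i}-\sum_{i=1}^3 Y_i\partial_{Y_i}\Big)\tau=0,\qquad \Big(-\sum_{i=1}^3 X_i\partial_{X_i}+2\sum_{i=1}^3 Y_i\partial_{Y_i}\Big)\tau=0,$$ $$\Big(X_1(X_1+2X_2+2X_3)\partial_{X_1}+X_2(X_2+2X_3)\partial_{X_2}+X_3^2\partial_{X_3}-Y_1(X_2+X_3)\partial_{Y_1}-Y_2X_3\partial_{Y_2}\Big)\tau=0,$$ $$\Big(Y_1(Y_1+2Y_2+2Y_3)\partial_{Y_1}+Y_2(Y_2+2Y_3)\partial_{Y_2}+Y_3^2\partial_{Y_3}-X_1(Y_1+Y_2+Y_3)\partial_{X_1}-X_2(Y_2+Y_3)\partial_{X_2}-X_3Y_3\partial_{X_3}\Big)\tau=0.$$ Then the function $$\tau_1^{(3)}=\frac{\Big(\sum_{1\le i\le j\le 2}X_iY_j\Big)\Big(\sum_{1\le i\le j\le 2}X_{i+1}Y_{j+1}\Big)}{X_2Y_2\sum_{1\le i\le j\le 3}X_iY_j} =\frac{(X_1Y_1+X_1Y_2+X_2Y_2)(X_2Y_2+X_2Y_3+X_3Y_3)}{X_2Y_2\,(X_1Y_1+X_1Y_2+X_1Y_3+X_2Y_2+X_2Y_3+X_3Y_3)}$$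 is a solution of this system, and it is the only nontrivial solution up to functional dependence: every solution is (locally) of the form $F\big(\tau_1^{(3)}\big)$ for some function $F$ of one variable.
   Context: This system arises in the construction of the lattice $W_3$ algebra (the $\mathfrak{sl}_3$ case), with the Poisson bracket on the variables given by $\{X_i,X_j\}=2X_iX_j$, $\{Y_i,Y_j\}=2Y_iY_j$ for $i<j$, $\{X_i,X_i\}=\{Y_i,Y_i\}=0$, $\{X_i,Y_j\}=X_iY_j$ if $i>j$ and $\{X_i,Y_j\}=-X_iY_j$ if $i\le j$. The first two operators express that solutions have zero weight; the last two come from the screening operators $X_1+X_2+X_3$ and $Y_1+Y_2+Y_3$. *)

theory Defs
  imports "HOL-Analysis.Analysis"
begin

text \<open>Points of R^6 are vectors x :: real^6 with coordinates
  X1 = x$1, X2 = x$2, X3 = x$3, Y1 = x$4, Y2 = x$5, Y3 = x$6.\<close>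

definition pos_orthant :: "(real^6) set" where
  "pos_orthant = {x. \<forall>i. 0 < x $ i}"

definition pd :: "6 \<Rightarrow> (real^6 \<Rightarrow> real) \<Rightarrow> real^6 \<Rightarrow> real" where
  "pd i f x = frechet_derivative f (at x) (axis i 1)"

fun Ck_on :: "nat \<Rightarrow> (real^6) set \<Rightarrow> (real^6 \<Rightarrow> real) \<Rightarrow> bool" where
  "Ck_on 0 S f = continuous_on S f"
| "Ck_on (Suc k) S f = (f differentiable_on S \<and> (\<forall>i. Ck_on k S (pd i f)))"

definition smooth_on :: "(real^6) set \<Rightarrow> (real^6 \<Rightarrow> real) \<Rightarrow> bool" where
  "smooth_on S f = (\<forall>k. Ck_on k S f)"

definition D1 :: "(real^6 \<Rightarrow> real) \<Rightarrow> real^6 \<Rightarrow> real" where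
  "D1 f x = 2 * (x$1 * pd 1 f x + x$2 * pd 2 f x + x$3 * pd 3 f x)
           - (x$4 * pd 4 f x + x$5 * pd 5 f x + x$6 * pd 6 f x)"

definition D2 :: "(real^6 \<Rightarrow> real) \<Rightarrow> real^6 \<Rightarrow> real" where
  "D2 f x = - (x$1 * pd 1 f x + x$2 * pd 2 f x + x$3 * pd 3 f x)
           + 2 * (x$4 * pd 4 f x + x$5 * pd 5 f x + x$6 * pd 6 f x)"

definition D3 :: "(real^6 \<Rightarrow> real) \<Rightarrow> real^6 \<Rightarrow> real" where
  "D3 f x = x$1 * (x$1 + 2 * x$2 + 2 * x$3) * pd 1 f x
           + x$2 * (x$2 + 2 * x$3) * pd 2 f x
           + (x$3)^2 * pd 3 f x
           - x$4 * (x$2 + x$3) * pd 4 f x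
           - x$5 * x$3 * pd 5 f x"

definition D4 :: "(real^6 \<Rightarrow> real) \<Rightarrow> real^6 \<Rightarrow> real" where
  "D4 f x = x$4 * (x$4 + 2 * x$5 + 2 * x$6) * pd 4 f x
           + x$5 * (x$5 + 2 * x$6) * pd 5 f x
           + (x$6)^2 * pd 6 f x
           - x$1 * (x$4 + x$5 + x$6) * pd 1 f x
           - x$2 * (x$5 + x$6) * pd 2 f x
           - x$3 * x$6 * pd 3 f x"

definition is_solution :: "(real^6 \<Rightarrow> real) \<Rightarrow> bool" where
  "is_solution f \<longleftrightarrow> smooth_on pos_orthant f \<and>
     (\<forall>x\<in>pos_orthant. D1 f x = 0 \<and> D2 f x = 0 \<and> D3 f x = 0 \<and> D4 f x = 0)"

definition tau13 :: "real^6 \<Rightarrow> real" where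
  "tau13 x =
     ((x$1 * x$4 + x$1 * x$5 + x$2 * x$5) * (x$2 * x$5 + x$2 * x$6 + x$3 * x$6)) /
     (x$2 * x$5 * (x$1 * x$4 + x$1 * x$5 + x$1 * x$6 + x$2 * x$5 + x$2 * x$6 + x$3 * x$6))"

end

theory Submission
  imports Defs
begin


lemma pd_at: "(f has_derivative f') (at x) \<Longrightarrow> pd i f x = f' (axis i 1)"
  unfolding pd_def using frechet_derivative_at by metis

lemma Ck_mono: "Ck_on (Suc k) S f \<Longrightarrow> Ck_on k S f"
proof (induction k arbitrary: f)
  case 0
  then show ?case by (simp add: differentiable_imp_continuous_on)
next
  case (Suc k)
  then show ?case by auto
qed

lemma Ck_cong: "open S \<Longrightarrow> (\<And>x. x \<in> S \<Longrightarrow> f x = g x) \<Longrightarrow> Ck_on k S f \<Longrightarrow> Ck_on k S g"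
proof (induction k arbitrary: f g)
  case 0
  then show ?case using continuous_on_cong by force
next
  case (Suc k)
  have df: "f differentiable_on S" using Suc.prems by simp
  have dg: "g differentiable_on S"
    unfolding differentiable_on_def
  proof
    fix x assume x: "x \<in> S"
    then have "f differentiable at x" using df Suc.prems(1) by (simp add: differentiable_on_eq_differentiable_at)
    then obtain f' where "(f has_derivative f') (at x)" by (auto simp: differentiable_def)
    then have "(g has_derivative f') (at x)"
      by (rule has_derivative_transform_within_open[OF _ Suc.prems(1) x]) (use Suc.prems(2) in auto)
    then show "g differentiable at x within S" by (auto simp: differentiable_def intro: has_derivative_at_withinI)
  qed
  have "Ck_on k S (pd i g)" for i
  proof (rule Suc.IH[of "pd i f"])
    show "open S" by fact
    show "Ck_on k S (pd i f)" using Suc.prems by simp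
    fix x assume x: "x \<in> S"
    then have "f differentiable at x" using df Suc.prems(1) by (simp add: differentiable_on_eq_differentiable_at)
    then show "pd i f x = pd i g x" unfolding pd_def
      using frechet_derivative_transform_within_open[OF _ Suc.prems(1) x, of f g] Suc.prems(2) by auto
  qed
  then show ?case using dg by simp
qed

lemma Ck_diff_at: "open S \<Longrightarrow> Ck_on (Suc k) S f \<Longrightarrow> x \<in> S \<Longrightarrow> (f has_derivative frechet_derivative f (at x)) (at x)"
  by (simp add: differentiable_on_eq_differentiable_at frechet_derivative_works[symmetric])

lemma Ck_add: "open S \<Longrightarrow> Ck_on k S f \<Longrightarrow> Ck_on k S g \<Longrightarrow> Ck_on k S (\<lambda>x. f x + g x)"
proof (induction k arbitrary: f g)
  case 0
  then show ?case by (auto intro: continuous_on_add)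
next
  case (Suc k)
  have "Ck_on k S (pd i (\<lambda>x. f x + g x))" for i
  proof (rule Ck_cong[OF Suc.prems(1)])
    show "Ck_on k S (\<lambda>x. pd i f x + pd i g x)" using Suc by simp
    fix x assume x: "x \<in> S"
    have "((\<lambda>x. f x + g x) has_derivative (\<lambda>h. frechet_derivative f (at x) h + frechet_derivative g (at x) h)) (at x)"
      using Ck_diff_at[OF Suc.prems(1) Suc.prems(2) x] Ck_diff_at[OF Suc.prems(1) Suc.prems(3) x]
      by (rule has_derivative_add)
    then have "pd i (\<lambda>x. f x + g x) x = frechet_derivative f (at x) (axis i 1) + frechet_derivative g (at x) (axis i 1)"
      by (rule pd_at)
    then show "pd i f x + pd i g x = pd i (\<lambda>x. f x + g x) x"
      unfolding pd_def[of i f] pd_def[of i g] by simp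
  qed
  then show ?case using Suc.prems by (auto intro: differentiable_on_add)
qed

lemma Ck_mult: "open S \<Longrightarrow> Ck_on k S f \<Longrightarrow> Ck_on k S g \<Longrightarrow> Ck_on k S (\<lambda>x. f x * g x)"
proof (induction k arbitrary: f g)
  case 0
  then show ?case by (auto intro: continuous_on_mult)
next
  case (Suc k)
  have "Ck_on k S (pd i (\<lambda>x. f x * g x))" for i
  proof (rule Ck_cong[OF Suc.prems(1)])
    show "Ck_on k S (\<lambda>x. f x * pd i g x + pd i f x * g x)"
      using Suc Ck_mono by (auto intro!: Ck_add)
    fix x assume x: "x \<in> S"
    have "((\<lambda>x. f x * g x) has_derivative (\<lambda>h. f x * frechet_derivative g (at x) h + frechet_derivative f (at x) h * g x)) (at x)"
      using Ck_diff_at[OF Suc.prems(1) Suc.prems(2) x] Ck_diff_at[OF Suc.prems(1) Suc.prems(3) x]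
      by (rule has_derivative_mult)
    then have "pd i (\<lambda>x. f x * g x) x = f x * frechet_derivative g (at x) (axis i 1) + frechet_derivative f (at x) (axis i 1) * g x"
      by (rule pd_at)
    then show "f x * pd i g x + pd i f x * g x = pd i (\<lambda>x. f x * g x) x"
      unfolding pd_def[of i f] pd_def[of i g] by simp
  qed
  then show ?case using Suc.prems by (auto intro: differentiable_on_mult)
qed

lemma Ck_const: "open S \<Longrightarrow> Ck_on k S (\<lambda>x. c)"
proof (induction k arbitrary: c)
  case 0
  then show ?case by simp
next
  case (Suc k)
  have "pd i (\<lambda>x. c) = (\<lambda>x. 0)" for i by (rule ext) (simp add: pd_def)
  then have "Ck_on k S (pd i (\<lambda>x. c))" for i
    using Suc by simp
  then show ?case by simp
qed

lemma Ck_coord: "open S \<Longrightarrow> Ck_on k S (\<lambda>x. x $ j)"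
proof (cases k)
  case 0
  then show ?thesis by (simp add: continuous_on_component continuous_on_id)
next
  case (Suc k')
  assume S: "open S"
  have "Ck_on k' S (pd i (\<lambda>x. x $ j))" for i
  proof (rule Ck_cong[OF S])
    show "Ck_on k' S (\<lambda>x. axis i 1 $ j)" using S Ck_const by blast
    fix x :: "real^6"
    have "((\<lambda>x. x $ j) has_derivative (\<lambda>h. h $ j)) (at x)"
      by (rule bounded_linear_imp_has_derivative) (simp add: bounded_linear_vec_nth)
    then show "axis i 1 $ j = pd i (\<lambda>x. x $ j) x" by (simp add: pd_at)
  qed
  moreover have "(\<lambda>x. x $ j) differentiable_on S"
    by (rule bounded_linear_imp_differentiable_on) (rule bounded_linear_vec_nth)
  ultimately show ?thesis using Suc by simp
qed

lemma Ck_inverse: "open S \<Longrightarrow> Ck_on k S f \<Longrightarrow> (\<And>x. x \<in> S \<Longrightarrow> f x \<noteq> 0) \<Longrightarrow> Ck_on k S (\<lambda>x. inverse (f x))"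
proof (induction k arbitrary: f)
  case 0
  then show ?case by (auto intro: continuous_on_inverse)
next
  case (Suc k)
  have invk: "Ck_on k S (\<lambda>x. inverse (f x))" using Suc Ck_mono by blast
  have "Ck_on k S (pd i (\<lambda>x. inverse (f x)))" for i
  proof (rule Ck_cong[OF Suc.prems(1)])
    show "Ck_on k S (\<lambda>x. (-1) * (inverse (f x) * (pd i f x * inverse (f x))))"
      using Suc invk by (intro Ck_mult Ck_const) auto
    fix x assume x: "x \<in> S"
    have "((\<lambda>x. inverse (f x)) has_derivative (\<lambda>h. - (inverse (f x) * frechet_derivative f (at x) h * inverse (f x)))) (at x)"
      by (rule Deriv.has_derivative_inverse[OF Suc.prems(3)[OF x] Ck_diff_at[OF Suc.prems(1) Suc.prems(2) x]])
    then have "pd i (\<lambda>x. inverse (f x)) x = - (inverse (f x) * frechet_derivative f (at x) (axis i 1) * inverse (f x))"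
      by (rule pd_at)
    then show "(-1) * (inverse (f x) * (pd i f x * inverse (f x))) = pd i (\<lambda>x. inverse (f x)) x"
      unfolding pd_def[of i f] by (simp add: mult.assoc)
  qed
  moreover have "(\<lambda>x. inverse (f x)) differentiable_on S"
    using Suc.prems by (auto intro!: differentiable_on_inverse)
  ultimately show ?case by simp
qed



lemma exhaust_6:
  fixes x :: 6
  shows "x = 1 \<or> x = 2 \<or> x = 3 \<or> x = 4 \<or> x = 5 \<or> x = 6"
proof (induct x)
  case (of_int z)
  then have "z = 0 \<or> z = 1 \<or> z = 2 \<or> z = 3 \<or> z = 4 \<or> z = 5" by fastforce
  then show ?case by auto
qed

lemma distinct6[simp]: "(1::6) \<noteq> 2" "(1::6) \<noteq> 3" "(1::6) \<noteq> 4" "(1::6) \<noteq> 5" "(1::6) \<noteq> 6"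
 "(2::6) \<noteq> 3" "(2::6) \<noteq> 4" "(2::6) \<noteq> 5" "(2::6) \<noteq> 6"
 "(3::6) \<noteq> 4" "(3::6) \<noteq> 5" "(3::6) \<noteq> 6" "(4::6) \<noteq> 5" "(4::6) \<noteq> 6" "(5::6) \<noteq> 6"
 "(2::6) \<noteq> 1" "(3::6) \<noteq> 1" "(4::6) \<noteq> 1" "(5::6) \<noteq> 1" "(6::6) \<noteq> 1"
 "(3::6) \<noteq> 2" "(4::6) \<noteq> 2" "(5::6) \<noteq> 2" "(6::6) \<noteq> 2"
 "(4::6) \<noteq> 3" "(5::6) \<noteq> 3" "(6::6) \<noteq> 3" "(5::6) \<noteq> 4" "(6::6) \<noteq> 4" "(6::6) \<noteq> 5"
  by simp_all

lemma forall_6: "(\<forall>i::6. P i) \<longleftrightarrow> P 1 \<and> P 2 \<and> P 3 \<and> P 4 \<and> P 5 \<and> P 6"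
  by (metis exhaust_6)

definition mk :: "real \<Rightarrow> real \<Rightarrow> real \<Rightarrow> real \<Rightarrow> real \<Rightarrow> real \<Rightarrow> real^6" where
  "mk a b c d e f = a *\<^sub>R axis 1 1 + b *\<^sub>R axis 2 1 + c *\<^sub>R axis 3 1 + d *\<^sub>R axis 4 1 + e *\<^sub>R axis 5 1 + f *\<^sub>R axis 6 1"

lemma mk_nth[simp]: "mk a b c d e f $ 1 = a" "mk a b c d e f $ 2 = b" "mk a b c d e f $ 3 = c"
  "mk a b c d e f $ 4 = d" "mk a b c d e f $ 5 = e" "mk a b c d e f $ 6 = f"
  by (simp_all add: mk_def axis_def)

lemma mk_eq: "(x::real^6) = mk (x$1) (x$2) (x$3) (x$4) (x$5) (x$6)"
  by (simp add: vec_eq_iff forall_6)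

lemma vec6_eqI: "(x::real^6)$1 = y$1 \<Longrightarrow> x$2 = y$2 \<Longrightarrow> x$3 = y$3 \<Longrightarrow> x$4 = y$4 \<Longrightarrow> x$5 = y$5 \<Longrightarrow> x$6 = y$6 \<Longrightarrow> x = y"
  by (simp add: vec_eq_iff forall_6)

lemma lin_mk: "linear L \<Longrightarrow> L (mk a b c d e f) = a * L (axis 1 1) + b * L (axis 2 1) + c * L (axis 3 1) + d * L (axis 4 1) + e * L (axis 5 1) + f * L (axis 6 1)"
  for L :: "real^6 \<Rightarrow> real"
  by (simp add: mk_def linear_add linear_scale)

lemma orth_iff: "x \<in> pos_orthant \<longleftrightarrow> 0 < x$1 \<and> 0 < x$2 \<and> 0 < x$3 \<and> 0 < x$4 \<and> 0 < x$5 \<and> 0 < x$6"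
  by (simp add: pos_orthant_def forall_6)

lemma open_orth: "open pos_orthant"
proof -
  have "pos_orthant = (\<Inter>i\<in>UNIV. {x::real^6. x$i > 0})" by (auto simp: pos_orthant_def)
  moreover have "open (\<Inter>i\<in>UNIV. {x::real^6. x$i > 0})"
    by (intro open_INT) (auto intro: open_halfspace_component_gt_cart)
  ultimately show ?thesis by simp
qed

definition V1f :: "real^6 \<Rightarrow> real^6" where
  "V1f x = mk (2*x$1) (2*x$2) (2*x$3) (-x$4) (-x$5) (-x$6)"
definition V2f :: "real^6 \<Rightarrow> real^6" where
  "V2f x = mk (-x$1) (-x$2) (-x$3) (2*x$4) (2*x$5) (2*x$6)"
definition V3f :: "real^6 \<Rightarrow> real^6" where
  "V3f x = mk (x$1 * (x$1 + 2 * x$2 + 2 * x$3)) (x$2 * (x$2 + 2 * x$3)) ((x$3)^2)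
     (- x$4 * (x$2 + x$3)) (- x$5 * x$3) 0"
definition V4f :: "real^6 \<Rightarrow> real^6" where
  "V4f x = mk (- x$1 * (x$4 + x$5 + x$6)) (- x$2 * (x$5 + x$6)) (- x$3 * x$6)
     (x$4 * (x$4 + 2 * x$5 + 2 * x$6)) (x$5 * (x$5 + 2 * x$6)) ((x$6)^2)"

lemma D_frechet:
  assumes "\<tau> differentiable at x"
  shows "D1 \<tau> x = frechet_derivative \<tau> (at x) (V1f x)"
    "D2 \<tau> x = frechet_derivative \<tau> (at x) (V2f x)"
    "D3 \<tau> x = frechet_derivative \<tau> (at x) (V3f x)"
    "D4 \<tau> x = frechet_derivative \<tau> (at x) (V4f x)"
  using linear_frechet_derivative[OF assms]
  by (simp_all add: lin_mk V1f_def V2f_def V3f_def V4f_def D1_def D2_def D3_def D4_def pd_def algebra_simps)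



definition tA :: "real^6 \<Rightarrow> real" where "tA x = x$1 * x$4 + x$1 * x$5 + x$2 * x$5"
definition tB :: "real^6 \<Rightarrow> real" where "tB x = x$2 * x$5 + x$2 * x$6 + x$3 * x$6"
definition tC :: "real^6 \<Rightarrow> real" where "tC x = x$1 * x$4 + x$1 * x$5 + x$1 * x$6 + x$2 * x$5 + x$2 * x$6 + x$3 * x$6"

lemma has_derivative_nth[derivative_intros]: "((\<lambda>x::real^6. x $ i) has_derivative (\<lambda>h. h $ i)) F"
  by (rule bounded_linear_imp_has_derivative) (rule bounded_linear_vec_nth)

lemma tau13_alt: "tau13 x = tA x * tB x / (x$2 * x$5 * tC x)"
  by (simp add: tau13_def tA_def tB_def tC_def)

lemma tC_pos: "x \<in> pos_orthant \<Longrightarrow> 0 < tC x"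
  unfolding tC_def orth_iff by (intro add_pos_pos mult_pos_pos) auto

lemma tau13_den: "x \<in> pos_orthant \<Longrightarrow> x$2 * x$5 * (x$1 * x$4 + x$1 * x$5 + x$1 * x$6 + x$2 * x$5 + x$2 * x$6 + x$3 * x$6) \<noteq> 0"
  using tC_pos[of x] unfolding tC_def orth_iff by simp

lemma tau13_smooth: "smooth_on pos_orthant tau13"
  unfolding smooth_on_def
proof
  fix k
  have "Ck_on k pos_orthant (\<lambda>x. ((x$1 * x$4 + x$1 * x$5 + x$2 * x$5) * (x$2 * x$5 + x$2 * x$6 + x$3 * x$6)) *
     inverse (x$2 * x$5 * (x$1 * x$4 + x$1 * x$5 + x$1 * x$6 + x$2 * x$5 + x$2 * x$6 + x$3 * x$6)))"
    by (intro Ck_mult Ck_add Ck_coord Ck_inverse open_orth tau13_den)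
  then show "Ck_on k pos_orthant tau13"
    by (rule Ck_cong[OF open_orth, rotated]) (simp add: tau13_def divide_inverse)
qed

definition tAd where "tAd (x::real^6) (h::real^6) = h$1 * x$4 + x$1 * h$4 + h$1 * x$5 + x$1 * h$5 + h$2 * x$5 + x$2 * h$5"
definition tBd where "tBd (x::real^6) (h::real^6) = h$2 * x$5 + x$2 * h$5 + h$2 * x$6 + x$2 * h$6 + h$3 * x$6 + x$3 * h$6"
definition tCd where "tCd (x::real^6) (h::real^6) = h$1 * x$4 + x$1 * h$4 + h$1 * x$5 + x$1 * h$5 + h$1 * x$6 + x$1 * h$6
   + h$2 * x$5 + x$2 * h$5 + h$2 * x$6 + x$2 * h$6 + h$3 * x$6 + x$3 * h$6"

lemma tA_d: "(tA has_derivative tAd x) (at x)"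
  unfolding tA_def[abs_def] tAd_def[abs_def] by (auto intro!: derivative_eq_intros ext simp: algebra_simps)
lemma tB_d: "(tB has_derivative tBd x) (at x)"
  unfolding tB_def[abs_def] tBd_def[abs_def] by (auto intro!: derivative_eq_intros ext simp: algebra_simps)
lemma tC_d: "(tC has_derivative tCd x) (at x)"
  unfolding tC_def[abs_def] tCd_def[abs_def] by (auto intro!: derivative_eq_intros ext simp: algebra_simps)

lemma tau13_has_derivative:
  assumes x: "x \<in> pos_orthant"
  shows "(tau13 has_derivative (\<lambda>h. ((tAd x h * tB x + tA x * tBd x h) * (x$2 * x$5 * tC x)
     - tA x * tB x * ((h$2 * x$5 + x$2 * h$5) * tC x + x$2 * x$5 * tCd x h)) / ((x$2 * x$5 * tC x) * (x$2 * x$5 * tC x)))) (at x)"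
proof -
  have pos: "x$2 * x$5 * tC x \<noteq> 0" using tau13_den[OF x] by (simp add: tC_def)
  have dN: "((\<lambda>x. tA x * tB x) has_derivative (\<lambda>h. tAd x h * tB x + tA x * tBd x h)) (at x)"
    using has_derivative_mult[OF tA_d tB_d] by (simp add: algebra_simps)
  have dD: "((\<lambda>x. x$2 * x$5 * tC x) has_derivative (\<lambda>h. (h$2 * x$5 + x$2 * h$5) * tC x + x$2 * x$5 * tCd x h)) (at x)"
    using tC_d by (auto intro!: derivative_eq_intros ext simp: algebra_simps)
  show ?thesis unfolding tau13_alt[abs_def] by (rule has_derivative_divide'[OF dN dD pos])
qed

lemma tau13_PDE:
  assumes x: "x \<in> pos_orthant"
  shows "D1 tau13 x = 0 \<and> D2 tau13 x = 0 \<and> D3 tau13 x = 0 \<and> D4 tau13 x = 0"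
proof -
  note d = tau13_has_derivative[OF x]
  have dif: "tau13 differentiable at x" using d by (auto simp: differentiable_def)
  note fr = frechet_derivative_at[OF d, symmetric]
  show ?thesis unfolding D_frechet[OF dif] fr
    by (simp add: tAd_def tBd_def tCd_def tA_def tB_def tC_def V1f_def V2f_def V3f_def V4f_def algebra_simps power2_eq_square)
qed



lemma sol_diff: "is_solution \<tau> \<Longrightarrow> y \<in> pos_orthant \<Longrightarrow> \<tau> differentiable at y"
proof -
  assume "is_solution \<tau>" "y \<in> pos_orthant"
  then have "Ck_on (Suc 0) pos_orthant \<tau>" by (simp add: is_solution_def smooth_on_def del: Ck_on.simps)
  then have "\<tau> differentiable_on pos_orthant" by simp
  then show ?thesis using \<open>y \<in> pos_orthant\<close> open_orth by (simp add: differentiable_on_eq_differentiable_at)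
qed

lemma flow_inv:
  fixes \<tau> :: "real^6 \<Rightarrow> real" and g :: "real \<Rightarrow> real^6"
  assumes sol: "is_solution \<tau>"
    and inO: "\<And>\<sigma>. \<sigma> \<in> closed_segment a b \<Longrightarrow> g \<sigma> \<in> pos_orthant"
    and gd: "\<And>\<sigma>. \<sigma> \<in> closed_segment a b \<Longrightarrow> (g has_vector_derivative v \<sigma>) (at \<sigma>)"
    and z: "\<And>\<sigma>. \<sigma> \<in> closed_segment a b \<Longrightarrow> frechet_derivative \<tau> (at (g \<sigma>)) (v \<sigma>) = 0"
  shows "\<tau> (g b) = \<tau> (g a)"
proof -
  have "\<exists>c. \<forall>\<sigma>\<in>closed_segment a b. (\<tau> \<circ> g) \<sigma> = c"
  proof (rule has_field_derivative_zero_constant)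
    show "convex (closed_segment a b)" by simp
    fix \<sigma> assume s: "\<sigma> \<in> closed_segment a b"
    have d1: "(\<tau> has_derivative frechet_derivative \<tau> (at (g \<sigma>))) (at (g \<sigma>))"
      using sol_diff[OF sol inO[OF s]] frechet_derivative_works by blast
    have d2: "(g has_derivative (\<lambda>h. h *\<^sub>R v \<sigma>)) (at \<sigma>)"
      using gd[OF s] by (simp add: has_vector_derivative_def)
    have lin: "linear (frechet_derivative \<tau> (at (g \<sigma>)))"
      using sol_diff[OF sol inO[OF s]] by (rule linear_frechet_derivative)
    have "((\<tau> \<circ> g) has_derivative (\<lambda>h. frechet_derivative \<tau> (at (g \<sigma>)) (h *\<^sub>R v \<sigma>))) (at \<sigma>)"
      using diff_chain_at[OF d2 d1] by (simp add: comp_def)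
    moreover have "(\<lambda>h. frechet_derivative \<tau> (at (g \<sigma>)) (h *\<^sub>R v \<sigma>)) = (\<lambda>h. 0 * h)"
      using z[OF s] by (simp add: linear_scale[OF lin])
    ultimately have "((\<tau> \<circ> g) has_derivative (\<lambda>h. 0 * h)) (at \<sigma>)" by simp
    then have "((\<tau> \<circ> g) has_derivative (\<lambda>h. 0 * h)) (at \<sigma> within closed_segment a b)"
      by (rule has_derivative_at_withinI)
    moreover have "(*) 0 = (\<lambda>h::real. 0::real)" by auto
    ultimately show "((\<tau> \<circ> g) has_field_derivative 0) (at \<sigma> within closed_segment a b)"
      unfolding has_field_derivative_def by simp
  qed
  then show ?thesis by fastforce
qed

lemma vd_sc: "(f has_real_derivative d) (at x within S) \<Longrightarrow> ((\<lambda>\<sigma>. f \<sigma> *\<^sub>R c) has_vector_derivative d *\<^sub>R c) (at x within S)"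
  using has_vector_derivative_scaleR[OF _ has_vector_derivative_const, of f d x S c] by simp

lemma mk_vderiv:
  assumes "(f1 has_real_derivative d1) (at x within S)" "(f2 has_real_derivative d2) (at x within S)"
    "(f3 has_real_derivative d3) (at x within S)"
    "(f4 has_real_derivative d4) (at x within S)" "(f5 has_real_derivative d5) (at x within S)"
    "(f6 has_real_derivative d6) (at x within S)"
  shows "((\<lambda>\<sigma>. mk (f1 \<sigma>) (f2 \<sigma>) (f3 \<sigma>) (f4 \<sigma>) (f5 \<sigma>) (f6 \<sigma>)) has_vector_derivative mk d1 d2 d3 d4 d5 d6) (at x within S)"
  unfolding mk_def using assms
  by (intro has_vector_derivative_add vd_sc)



definition "S1 (x::real^6) = x$1 + x$2 + x$3"
definition "S2 (x::real^6) = x$2 + x$3"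
definition "S3 (x::real^6) = x$3"
definition "T1 (x::real^6) = x$4 + x$5 + x$6"
definition "T2 (x::real^6) = x$5 + x$6"
definition "T3 (x::real^6) = x$6"

definition M3 :: "real \<Rightarrow> real^6 \<Rightarrow> real^6" where
  "M3 s x = mk (S1 x / (1 - s * S1 x) - S2 x / (1 - s * S2 x)) (S2 x / (1 - s * S2 x) - S3 x / (1 - s * S3 x))
     (S3 x / (1 - s * S3 x)) (x$4 * (1 - s * S2 x)) (x$5 * (1 - s * S3 x)) (x$6)"

definition M4 :: "real \<Rightarrow> real^6 \<Rightarrow> real^6" where
  "M4 t x = mk (x$1 * (1 - t * T1 x)) (x$2 * (1 - t * T2 x)) (x$3 * (1 - t * T3 x))
     (T1 x / (1 - t * T1 x) - T2 x / (1 - t * T2 x)) (T2 x / (1 - t * T2 x) - T3 x / (1 - t * T3 x))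
     (T3 x / (1 - t * T3 x))"

lemma M3_0: "M3 0 x = x"
  by (rule vec6_eqI) (simp_all add: M3_def S1_def S2_def S3_def)
lemma M4_0: "M4 0 x = x"
  by (rule vec6_eqI) (simp_all add: M4_def T1_def T2_def T3_def)

lemma pos_S: "x \<in> pos_orthant \<Longrightarrow> 0 < S3 x \<and> S3 x < S2 x \<and> S2 x < S1 x"
  by (simp add: orth_iff S1_def S2_def S3_def)
lemma pos_T: "x \<in> pos_orthant \<Longrightarrow> 0 < T3 x \<and> T3 x < T2 x \<and> T2 x < T1 x"
  by (simp add: orth_iff T1_def T2_def T3_def)

lemma lt1_mono: "0 < (a::real) \<Longrightarrow> a \<le> b \<Longrightarrow> s * b < 1 \<Longrightarrow> s * a < 1"
proof (cases "s \<le> 0")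
  case True
  assume "0 < a" then have "s * a \<le> 0" using True by (simp add: mult_nonpos_nonneg)
  then show ?thesis by simp
next
  case False
  assume "a \<le> b" "s * b < 1"
  then have "s * a \<le> s * b" using False by simp
  then show ?thesis using \<open>s * b < 1\<close> by simp
qed

lemma M3_orth:
  assumes x: "x \<in> pos_orthant" and s: "s * S1 x < 1"
  shows "M3 s x \<in> pos_orthant"
proof -
  have p: "0 < S3 x" "S3 x < S2 x" "S2 x < S1 x" using pos_S[OF x] by auto
  have q1: "0 < 1 - s * S1 x" using s by simp
  have q2: "0 < 1 - s * S2 x" using lt1_mono[of "S2 x" "S1 x" s] s p by simp
  have q3: "0 < 1 - s * S3 x" using lt1_mono[of "S3 x" "S1 x" s] s p by simp
  have e: "\<And>a b. 0 < 1 - s * a \<Longrightarrow> 0 < 1 - s * b \<Longrightarrow> a / (1 - s * a) - b / (1 - s * b) = (a - b) / ((1 - s * a) * (1 - s * b))"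
    by (simp add: field_simps)
  show ?thesis unfolding orth_iff M3_def mk_nth e[OF q1 q2] e[OF q2 q3]
    using p q1 q2 q3 x by (auto simp: orth_iff)
qed

lemma M4_orth:
  assumes x: "x \<in> pos_orthant" and t: "t * T1 x < 1"
  shows "M4 t x \<in> pos_orthant"
proof -
  have p: "0 < T3 x" "T3 x < T2 x" "T2 x < T1 x" using pos_T[OF x] by auto
  have q1: "0 < 1 - t * T1 x" using t by simp
  have q2: "0 < 1 - t * T2 x" using lt1_mono[of "T2 x" "T1 x" t] t p by simp
  have q3: "0 < 1 - t * T3 x" using lt1_mono[of "T3 x" "T1 x" t] t p by simp
  have e: "\<And>a b. 0 < 1 - t * a \<Longrightarrow> 0 < 1 - t * b \<Longrightarrow> a / (1 - t * a) - b / (1 - t * b) = (a - b) / ((1 - t * a) * (1 - t * b))"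
    by (simp add: field_simps)
  show ?thesis unfolding orth_iff M4_def mk_nth e[OF q1 q2] e[OF q2 q3]
    using p q1 q2 q3 x by (auto simp: orth_iff)
qed

lemma seg_lt1: "\<sigma> \<in> closed_segment 0 s \<Longrightarrow> s * c < 1 \<Longrightarrow> 0 < (c::real) \<Longrightarrow> \<sigma> * c < 1"
  by (cases "0 \<le> s") (auto simp: closed_segment_eq_real_ivl intro: order.strict_trans1[OF mult_right_mono] order.strict_trans1[OF mult_nonpos_nonneg])

lemma hd: "\<sigma> * a \<noteq> 1 \<Longrightarrow> ((\<lambda>\<sigma>. a / (1 - \<sigma> * a)) has_real_derivative (a / (1 - \<sigma> * a))^2) (at \<sigma>)"
  by (auto intro!: derivative_eq_intros simp: field_simps power2_eq_square)

lemma alg1: "(p::real)^2 - q^2 = (p - q) * ((p - q) + 2*(q - r) + 2*r)"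
  by (simp add: algebra_simps power2_eq_square)
lemma alg2: "(q::real)^2 - r^2 = (q - r) * ((q - r) + 2*r)"
  by (simp add: algebra_simps power2_eq_square)
lemma alg1': "(p::real)^2 - q^2 = (p - q) * ((p - q) + 2*q)"
  by (simp add: algebra_simps power2_eq_square)

lemma M3_vd:
  assumes q1: "\<sigma> * S1 x \<noteq> 1" and q2: "\<sigma> * S2 x \<noteq> 1" and q3: "\<sigma> * S3 x \<noteq> 1"
  shows "((\<lambda>\<sigma>. M3 \<sigma> x) has_vector_derivative V3f (M3 \<sigma> x)) (at \<sigma>)"
proof -
  note h1 = hd[OF q1] and h2 = hd[OF q2] and h3 = hd[OF q3]
  have e4: "- (x$4 * (1 - \<sigma> * S2 x)) * (S2 x / (1 - \<sigma> * S2 x) - S3 x / (1 - \<sigma> * S3 x) + S3 x / (1 - \<sigma> * S3 x)) = - x$4 * S2 x"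
    using q2 by (simp add: field_simps)
  have e5: "- (x$5 * (1 - \<sigma> * S3 x)) * (S3 x / (1 - \<sigma> * S3 x)) = - x$5 * S3 x"
    using q3 by (simp add: field_simps)
  have "((\<lambda>\<sigma>. M3 \<sigma> x) has_vector_derivative V3f (M3 \<sigma> x)) (at \<sigma> within UNIV)"
    unfolding M3_def V3f_def mk_nth
  proof (rule mk_vderiv)
    show "((\<lambda>\<sigma>. S1 x / (1 - \<sigma> * S1 x) - S2 x / (1 - \<sigma> * S2 x)) has_real_derivative
      (S1 x / (1 - \<sigma> * S1 x) - S2 x / (1 - \<sigma> * S2 x)) *
      (S1 x / (1 - \<sigma> * S1 x) - S2 x / (1 - \<sigma> * S2 x) + 2 * (S2 x / (1 - \<sigma> * S2 x) - S3 x / (1 - \<sigma> * S3 x)) +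
       2 * (S3 x / (1 - \<sigma> * S3 x)))) (at \<sigma>)"
      unfolding alg1[symmetric] by (rule DERIV_diff[OF h1 h2])
    show "((\<lambda>\<sigma>. S2 x / (1 - \<sigma> * S2 x) - S3 x / (1 - \<sigma> * S3 x)) has_real_derivative
      (S2 x / (1 - \<sigma> * S2 x) - S3 x / (1 - \<sigma> * S3 x)) *
      (S2 x / (1 - \<sigma> * S2 x) - S3 x / (1 - \<sigma> * S3 x) + 2 * (S3 x / (1 - \<sigma> * S3 x)))) (at \<sigma>)"
      unfolding alg1'[symmetric] by (rule DERIV_diff[OF h2 h3])
    show "((\<lambda>\<sigma>. S3 x / (1 - \<sigma> * S3 x)) has_real_derivative (S3 x / (1 - \<sigma> * S3 x))\<^sup>2) (at \<sigma>)"
      by (rule h3)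
    show "((\<lambda>\<sigma>. x $ 4 * (1 - \<sigma> * S2 x)) has_real_derivative
      - (x$4 * (1 - \<sigma> * S2 x)) * (S2 x / (1 - \<sigma> * S2 x) - S3 x / (1 - \<sigma> * S3 x) + S3 x / (1 - \<sigma> * S3 x))) (at \<sigma>)"
      unfolding e4 by (auto intro!: derivative_eq_intros)
    show "((\<lambda>\<sigma>. x $ 5 * (1 - \<sigma> * S3 x)) has_real_derivative
      - (x$5 * (1 - \<sigma> * S3 x)) * (S3 x / (1 - \<sigma> * S3 x))) (at \<sigma>)"
      unfolding e5 by (auto intro!: derivative_eq_intros)
    show "((\<lambda>\<sigma>. x $ 6) has_real_derivative 0) (at \<sigma>)" by simp
  qed
  then show ?thesis by simp
qed

lemma M3_inv:
  assumes sol: "is_solution \<tau>" and x: "x \<in> pos_orthant" and s: "s * S1 x < 1"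
  shows "\<tau> (M3 s x) = \<tau> x"
proof -
  have "\<tau> (M3 s x) = \<tau> (M3 0 x)"
  proof (rule flow_inv[OF sol, where v = "\<lambda>\<sigma>. V3f (M3 \<sigma> x)"])
    fix \<sigma> assume sg: "\<sigma> \<in> closed_segment 0 s"
    have p: "0 < S3 x" "S3 x < S2 x" "S2 x < S1 x" using pos_S[OF x] by auto
    have ss: "\<sigma> * S1 x < 1" using seg_lt1[OF sg s] p by simp
    show o: "M3 \<sigma> x \<in> pos_orthant" by (rule M3_orth[OF x ss])
    show "frechet_derivative \<tau> (at (M3 \<sigma> x)) (V3f (M3 \<sigma> x)) = 0"
      using D_frechet(3)[OF sol_diff[OF sol o]] sol o by (simp add: is_solution_def)
    have q1: "1 - \<sigma> * S1 x \<noteq> 0" using ss by simp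
    have q2: "1 - \<sigma> * S2 x \<noteq> 0" using lt1_mono[of "S2 x" "S1 x" \<sigma>] ss p by simp
    have q3: "1 - \<sigma> * S3 x \<noteq> 0" using lt1_mono[of "S3 x" "S1 x" \<sigma>] ss p by simp
    show "((\<lambda>\<sigma>. M3 \<sigma> x) has_vector_derivative V3f (M3 \<sigma> x)) (at \<sigma>)"
      using M3_vd q1 q2 q3 by (simp add: mult.commute)
  qed
  then show ?thesis by (simp add: M3_0)
qed

lemma M4_vd:
  assumes q1: "\<sigma> * T1 x \<noteq> 1" and q2: "\<sigma> * T2 x \<noteq> 1" and q3: "\<sigma> * T3 x \<noteq> 1"
  shows "((\<lambda>\<sigma>. M4 \<sigma> x) has_vector_derivative V4f (M4 \<sigma> x)) (at \<sigma>)"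
proof -
  note h1 = hd[OF q1] and h2 = hd[OF q2] and h3 = hd[OF q3]
  have e1: "- (x$1 * (1 - \<sigma> * T1 x)) * (T1 x / (1 - \<sigma> * T1 x) - T2 x / (1 - \<sigma> * T2 x) +
     (T2 x / (1 - \<sigma> * T2 x) - T3 x / (1 - \<sigma> * T3 x)) + T3 x / (1 - \<sigma> * T3 x)) = - x$1 * T1 x"
    using q1 by (simp add: field_simps)
  have e2: "- (x$2 * (1 - \<sigma> * T2 x)) * (T2 x / (1 - \<sigma> * T2 x) - T3 x / (1 - \<sigma> * T3 x) + T3 x / (1 - \<sigma> * T3 x)) = - x$2 * T2 x"
    using q2 by (simp add: field_simps)
  have e3: "- (x$3 * (1 - \<sigma> * T3 x)) * (T3 x / (1 - \<sigma> * T3 x)) = - x$3 * T3 x"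
    using q3 by (simp add: field_simps)
  have "((\<lambda>\<sigma>. M4 \<sigma> x) has_vector_derivative V4f (M4 \<sigma> x)) (at \<sigma> within UNIV)"
    unfolding M4_def V4f_def mk_nth
  proof (rule mk_vderiv)
    show "((\<lambda>\<sigma>. T1 x / (1 - \<sigma> * T1 x) - T2 x / (1 - \<sigma> * T2 x)) has_real_derivative
      (T1 x / (1 - \<sigma> * T1 x) - T2 x / (1 - \<sigma> * T2 x)) *
      (T1 x / (1 - \<sigma> * T1 x) - T2 x / (1 - \<sigma> * T2 x) + 2 * (T2 x / (1 - \<sigma> * T2 x) - T3 x / (1 - \<sigma> * T3 x)) +
       2 * (T3 x / (1 - \<sigma> * T3 x)))) (at \<sigma>)"
      unfolding alg1[symmetric] by (rule DERIV_diff[OF h1 h2])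
    show "((\<lambda>\<sigma>. T2 x / (1 - \<sigma> * T2 x) - T3 x / (1 - \<sigma> * T3 x)) has_real_derivative
      (T2 x / (1 - \<sigma> * T2 x) - T3 x / (1 - \<sigma> * T3 x)) *
      (T2 x / (1 - \<sigma> * T2 x) - T3 x / (1 - \<sigma> * T3 x) + 2 * (T3 x / (1 - \<sigma> * T3 x)))) (at \<sigma>)"
      unfolding alg1'[symmetric] by (rule DERIV_diff[OF h2 h3])
    show "((\<lambda>\<sigma>. T3 x / (1 - \<sigma> * T3 x)) has_real_derivative (T3 x / (1 - \<sigma> * T3 x))\<^sup>2) (at \<sigma>)"
      by (rule h3)
    show "((\<lambda>\<sigma>. x $ 1 * (1 - \<sigma> * T1 x)) has_real_derivative - (x$1 * (1 - \<sigma> * T1 x)) * (T1 x / (1 - \<sigma> * T1 x) - T2 x / (1 - \<sigma> * T2 x) +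
     (T2 x / (1 - \<sigma> * T2 x) - T3 x / (1 - \<sigma> * T3 x)) + T3 x / (1 - \<sigma> * T3 x))) (at \<sigma>)"
      unfolding e1 by (auto intro!: derivative_eq_intros)
    show "((\<lambda>\<sigma>. x $ 2 * (1 - \<sigma> * T2 x)) has_real_derivative - (x$2 * (1 - \<sigma> * T2 x)) * (T2 x / (1 - \<sigma> * T2 x) - T3 x / (1 - \<sigma> * T3 x) + T3 x / (1 - \<sigma> * T3 x))) (at \<sigma>)"
      unfolding e2 by (auto intro!: derivative_eq_intros)
    show "((\<lambda>\<sigma>. x $ 3 * (1 - \<sigma> * T3 x)) has_real_derivative - (x$3 * (1 - \<sigma> * T3 x)) * (T3 x / (1 - \<sigma> * T3 x))) (at \<sigma>)"
      unfolding e3 by (auto intro!: derivative_eq_intros)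
  qed
  then show ?thesis by simp
qed

lemma M4_inv:
  assumes sol: "is_solution \<tau>" and x: "x \<in> pos_orthant" and s: "s * T1 x < 1"
  shows "\<tau> (M4 s x) = \<tau> x"
proof -
  have "\<tau> (M4 s x) = \<tau> (M4 0 x)"
  proof (rule flow_inv[OF sol, where v = "\<lambda>\<sigma>. V4f (M4 \<sigma> x)"])
    fix \<sigma> assume sg: "\<sigma> \<in> closed_segment 0 s"
    have p: "0 < T3 x" "T3 x < T2 x" "T2 x < T1 x" using pos_T[OF x] by auto
    have ss: "\<sigma> * T1 x < 1" using seg_lt1[OF sg s] p by simp
    show o: "M4 \<sigma> x \<in> pos_orthant" by (rule M4_orth[OF x ss])
    show "frechet_derivative \<tau> (at (M4 \<sigma> x)) (V4f (M4 \<sigma> x)) = 0"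
      using D_frechet(4)[OF sol_diff[OF sol o]] sol o by (simp add: is_solution_def)
    have q1: "\<sigma> * T1 x \<noteq> 1" using ss by simp
    have q2: "\<sigma> * T2 x \<noteq> 1" using lt1_mono[of "T2 x" "T1 x" \<sigma>] ss p by simp
    have q3: "\<sigma> * T3 x \<noteq> 1" using lt1_mono[of "T3 x" "T1 x" \<sigma>] ss p by simp
    show "((\<lambda>\<sigma>. M4 \<sigma> x) has_vector_derivative V4f (M4 \<sigma> x)) (at \<sigma>)"
      by (rule M4_vd[OF q1 q2 q3])
  qed
  then show ?thesis by (simp add: M4_0)
qed

definition SX :: "real \<Rightarrow> real^6 \<Rightarrow> real^6" where
  "SX a x = mk (a * x$1) (a * x$2) (a * x$3) (x$4) (x$5) (x$6)"
definition SY :: "real \<Rightarrow> real^6 \<Rightarrow> real^6" where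
  "SY a x = mk (x$1) (x$2) (x$3) (a * x$4) (a * x$5) (a * x$6)"

lemma SX_orth: "x \<in> pos_orthant \<Longrightarrow> 0 < a \<Longrightarrow> SX a x \<in> pos_orthant"
  by (simp add: SX_def orth_iff)
lemma SY_orth: "x \<in> pos_orthant \<Longrightarrow> 0 < a \<Longrightarrow> SY a x \<in> pos_orthant"
  by (simp add: SY_def orth_iff)

lemma seg_pos: "\<sigma> \<in> closed_segment 1 a \<Longrightarrow> 0 < a \<Longrightarrow> 0 < (\<sigma>::real)"
  by (cases "1 \<le> a") (auto simp: closed_segment_eq_real_ivl)

lemma SX_inv:
  assumes sol: "is_solution \<tau>" and x: "x \<in> pos_orthant" and a: "0 < a"
  shows "\<tau> (SX a x) = \<tau> x"
proof -
  have "\<tau> (SX a x) = \<tau> (SX 1 x)"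
  proof (rule flow_inv[OF sol, where v = "\<lambda>\<sigma>. mk (x$1) (x$2) (x$3) 0 0 0"])
    fix \<sigma> assume sg: "\<sigma> \<in> closed_segment 1 a"
    have sp: "0 < \<sigma>" by (rule seg_pos[OF sg a])
    show o: "SX \<sigma> x \<in> pos_orthant" by (rule SX_orth[OF x sp])
    have dif: "\<tau> differentiable at (SX \<sigma> x)" by (rule sol_diff[OF sol o])
    have "D1 \<tau> (SX \<sigma> x) = 0" "D2 \<tau> (SX \<sigma> x) = 0" using sol o by (auto simp: is_solution_def)
    then have "\<sigma> * frechet_derivative \<tau> (at (SX \<sigma> x)) (mk (x$1) (x$2) (x$3) 0 0 0) = 0"
      unfolding D1_def D2_def lin_mk[OF linear_frechet_derivative[OF dif]]
      by (simp add: SX_def pd_def algebra_simps)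
    then show "frechet_derivative \<tau> (at (SX \<sigma> x)) (mk (x$1) (x$2) (x$3) 0 0 0) = 0" using sp by simp
    have "((\<lambda>\<sigma>. SX \<sigma> x) has_vector_derivative mk (x$1) (x$2) (x$3) 0 0 0) (at \<sigma> within UNIV)"
      unfolding SX_def by (rule mk_vderiv) (auto intro!: derivative_eq_intros)
    then show "((\<lambda>\<sigma>. SX \<sigma> x) has_vector_derivative mk (x$1) (x$2) (x$3) 0 0 0) (at \<sigma>)" by simp
  qed
  moreover have "SX 1 x = x" by (rule vec6_eqI) (simp_all add: SX_def)
  ultimately show ?thesis by simp
qed

lemma SY_inv:
  assumes sol: "is_solution \<tau>" and x: "x \<in> pos_orthant" and a: "0 < a"
  shows "\<tau> (SY a x) = \<tau> x"
proof -
  have "\<tau> (SY a x) = \<tau> (SY 1 x)"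
  proof (rule flow_inv[OF sol, where v = "\<lambda>\<sigma>. mk 0 0 0 (x$4) (x$5) (x$6)"])
    fix \<sigma> assume sg: "\<sigma> \<in> closed_segment 1 a"
    have sp: "0 < \<sigma>" by (rule seg_pos[OF sg a])
    show o: "SY \<sigma> x \<in> pos_orthant" by (rule SY_orth[OF x sp])
    have dif: "\<tau> differentiable at (SY \<sigma> x)" by (rule sol_diff[OF sol o])
    have "D1 \<tau> (SY \<sigma> x) = 0" "D2 \<tau> (SY \<sigma> x) = 0" using sol o by (auto simp: is_solution_def)
    then have "\<sigma> * frechet_derivative \<tau> (at (SY \<sigma> x)) (mk 0 0 0 (x$4) (x$5) (x$6)) = 0"
      unfolding D1_def D2_def lin_mk[OF linear_frechet_derivative[OF dif]]
      by (simp add: SY_def pd_def algebra_simps)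
    then show "frechet_derivative \<tau> (at (SY \<sigma> x)) (mk 0 0 0 (x$4) (x$5) (x$6)) = 0" using sp by simp
    have "((\<lambda>\<sigma>. SY \<sigma> x) has_vector_derivative mk 0 0 0 (x$4) (x$5) (x$6)) (at \<sigma> within UNIV)"
      unfolding SY_def by (rule mk_vderiv) (auto intro!: derivative_eq_intros)
    then show "((\<lambda>\<sigma>. SY \<sigma> x) has_vector_derivative mk 0 0 0 (x$4) (x$5) (x$6)) (at \<sigma>)" by simp
  qed
  moreover have "SY 1 x = x" by (rule vec6_eqI) (simp_all add: SY_def)
  ultimately show ?thesis by simp
qed



definition "P1 (x::real^6) = x$1 * T1 x + x$2 * T2 x + x$3 * T3 x"
definition "P2 (x::real^6) = x$2 * T2 x + x$3 * T3 x"
definition "P3 (x::real^6) = x$3 * T3 x"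

lemma pos_P: "x \<in> pos_orthant \<Longrightarrow> 0 < P3 x \<and> P3 x < P2 x \<and> P2 x < P1 x"
  by (simp add: orth_iff P1_def P2_def P3_def T1_def T2_def T3_def)

lemma M3_S:
  assumes "s * S1 x \<noteq> 1" "s * S2 x \<noteq> 1" "s * S3 x \<noteq> 1"
  shows "S1 (M3 s x) = S1 x / (1 - s * S1 x)" "S2 (M3 s x) = S2 x / (1 - s * S2 x)" "S3 (M3 s x) = S3 x / (1 - s * S3 x)"
  by (simp_all add: M3_def S1_def[of "mk _ _ _ _ _ _"] S2_def[of "mk _ _ _ _ _ _"] S3_def[of "mk _ _ _ _ _ _"])

lemma gen3a:
  assumes ha: "a = 1 - s*A" and hb: "b = 1 - s*B" and nz: "a \<noteq> 0" "b \<noteq> 0"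
  shows "((A::real)/a - B/b)*(y5*b + y6) + B/b*y6 = ((A-B)*(y5+y6) + B*y6)/a"
  using nz by (simp add: field_simps) (simp add: ha hb algebra_simps)

lemma gen3b:
  assumes hc: "c = 1 - s*C" and ha: "a = 1 - s*A" and hb: "b = 1 - s*B" and nz: "c \<noteq> 0" "a \<noteq> 0" "b \<noteq> 0"
  shows "((C::real)/c - A/a)*(y4*a + y5*b + y6) + ((A-B)*(y5+y6) + B*y6)/a
   = ((C-A)*(y4+y5+y6) + (A-B)*(y5+y6) + B*y6)/c"
  using nz by (simp add: field_simps) (simp add: ha hb hc algebra_simps)

lemma P_S: "P1 x = (S1 x - S2 x)*(x$4+x$5+x$6) + (S2 x - S3 x)*(x$5+x$6) + S3 x * x$6"
  "P2 x = (S2 x - S3 x)*(x$5+x$6) + S3 x * x$6" "P3 x = S3 x * x$6"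
  by (simp_all add: P1_def P2_def P3_def S1_def S2_def S3_def T1_def T2_def T3_def algebra_simps)

lemma M3_P:
  assumes q: "s * S1 x \<noteq> 1" "s * S2 x \<noteq> 1" "s * S3 x \<noteq> 1"
  shows "P1 (M3 s x) = P1 x / (1 - s * S1 x)" "P2 (M3 s x) = P2 x / (1 - s * S2 x)" "P3 (M3 s x) = P3 x / (1 - s * S3 x)"
proof -
  have q': "1 - s * S1 x \<noteq> 0" "1 - s * S2 x \<noteq> 0" "1 - s * S3 x \<noteq> 0" using q by auto
  have e2: "P2 (M3 s x) = ((S2 x - S3 x)*(x$5+x$6) + S3 x * x$6) / (1 - s * S2 x)"
    unfolding P2_def T2_def T3_def M3_def mk_nth
    using gen3a[OF refl refl q'(2) q'(3), of "x$5" "x$6"] by (simp add: algebra_simps)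
  show "P2 (M3 s x) = P2 x / (1 - s * S2 x)" using e2 P_S(2) by simp
  have "P1 (M3 s x) = (S1 x / (1 - s * S1 x) - S2 x / (1 - s * S2 x)) * (x$4 * (1 - s * S2 x) + x$5 * (1 - s * S3 x) + x$6)
     + P2 (M3 s x)"
    unfolding P1_def P2_def T1_def T2_def T3_def M3_def mk_nth by (simp add: algebra_simps)
  also have "\<dots> = P1 x / (1 - s * S1 x)" unfolding e2 P_S(1)
    by (rule gen3b[OF refl refl refl q'])
  finally show "P1 (M3 s x) = P1 x / (1 - s * S1 x)" .
  show "P3 (M3 s x) = P3 x / (1 - s * S3 x)"
    unfolding P3_def T3_def M3_def mk_nth S3_def by simp
qed

lemma M4_S:
  assumes "t * T1 x \<noteq> 1" "t * T2 x \<noteq> 1" "t * T3 x \<noteq> 1"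
  shows "S1 (M4 t x) = S1 x - t * P1 x" "S2 (M4 t x) = S2 x - t * P2 x" "S3 (M4 t x) = S3 x - t * P3 x"
  by (simp_all add: M4_def P1_def P2_def P3_def S1_def S2_def S3_def algebra_simps)

lemma M4_T: "T1 (M4 t x) = T1 x / (1 - t * T1 x)" "T2 (M4 t x) = T2 x / (1 - t * T2 x)" "T3 (M4 t x) = T3 x / (1 - t * T3 x)"
  by (simp_all add: M4_def T1_def[of "mk _ _ _ _ _ _"] T2_def[of "mk _ _ _ _ _ _"] T3_def[of "mk _ _ _ _ _ _"])

lemma gen4: "1 - t * T \<noteq> 0 \<Longrightarrow> (a::real) * (1 - t * T) * (T / (1 - t * T)) = a * T"
  by simp

lemma M4_P:
  assumes "t * T1 x \<noteq> 1" "t * T2 x \<noteq> 1" "t * T3 x \<noteq> 1"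
  shows "P1 (M4 t x) = P1 x" "P2 (M4 t x) = P2 x" "P3 (M4 t x) = P3 x"
proof -
  have q: "1 - t * T1 x \<noteq> 0" "1 - t * T2 x \<noteq> 0" "1 - t * T3 x \<noteq> 0" using assms by auto
  have a1: "(M4 t x)$1 * T1 (M4 t x) = x$1 * T1 x" unfolding M4_T using q(1) by (simp add: M4_def field_simps)
  have a2: "(M4 t x)$2 * T2 (M4 t x) = x$2 * T2 x" unfolding M4_T using q(2) by (simp add: M4_def field_simps)
  have a3: "(M4 t x)$3 * T3 (M4 t x) = x$3 * T3 x" unfolding M4_T using q(3) by (simp add: M4_def field_simps)
  show "P1 (M4 t x) = P1 x" "P2 (M4 t x) = P2 x" "P3 (M4 t x) = P3 x"
    unfolding P1_def P2_def P3_def a1 a2 a3 by simp_all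
qed

lemma SX_SP: "S1 (SX a x) = a * S1 x" "S2 (SX a x) = a * S2 x" "S3 (SX a x) = a * S3 x"
  "P1 (SX a x) = a * P1 x" "P2 (SX a x) = a * P2 x" "P3 (SX a x) = a * P3 x"
  by (simp_all add: SX_def S1_def S2_def S3_def P1_def P2_def P3_def T1_def T2_def T3_def algebra_simps)
lemma SY_SP: "S1 (SY a x) = S1 x" "S2 (SY a x) = S2 x" "S3 (SY a x) = S3 x"
  "P1 (SY a x) = a * P1 x" "P2 (SY a x) = a * P2 x" "P3 (SY a x) = a * P3 x"
  by (simp_all add: SY_def S1_def S2_def S3_def P1_def P2_def P3_def T1_def T2_def T3_def algebra_simps)

lemma T1_SP: "x \<in> pos_orthant \<Longrightarrow> T1 x = (P1 x - P2 x) / (S1 x - S2 x)"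
  by (simp add: orth_iff P1_def P2_def S1_def S2_def)

lemma inj_SP:
  assumes y: "y \<in> pos_orthant" and z: "z \<in> pos_orthant"
    and "S1 y = S1 z" "S2 y = S2 z" "S3 y = S3 z" "P1 y = P1 z" "P2 y = P2 z" "P3 y = P3 z"
  shows "y = z"
proof -
  have e3: "y$3 = z$3" using assms by (simp add: S3_def)
  have e2: "y$2 = z$2" using assms by (simp add: S3_def S2_def)
  have e1: "y$1 = z$1" using assms by (simp add: S1_def S3_def S2_def)
  have "y$3 * y$6 = z$3 * z$6" using assms by (simp add: P3_def T3_def)
  then have e6: "y$6 = z$6" using e3 y by (simp add: orth_iff)
  have "y$2 * (y$5 + y$6) = z$2 * (z$5 + z$6)" using assms(7,8) by (simp add: P2_def P3_def T3_def T2_def)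
  then have e5: "y$5 = z$5" using e2 e6 y by (simp add: orth_iff)
  have "y$1 * (y$4 + y$5 + y$6) = z$1 * (z$4 + z$5 + z$6)" using assms(6,7) by (simp add: P1_def P2_def T1_def)
  then have e4: "y$4 = z$4" using e1 e5 e6 y by (simp add: orth_iff)
  show ?thesis using e1 e2 e3 e4 e5 e6 by (rule vec6_eqI)
qed

lemma tau13_SP:
  assumes y: "y \<in> pos_orthant"
  shows "tau13 y = (S1 y / P1 y - S3 y / P3 y) / (S2 y / P2 y - S3 y / P3 y)"
proof -
  have p: "0 < y$1" "0 < y$2" "0 < y$3" "0 < y$4" "0 < y$5" "0 < y$6" using y by (auto simp: orth_iff)
  have n1: "P1 y \<noteq> 0" "P2 y \<noteq> 0" "P3 y \<noteq> 0" using pos_P[OF y] by auto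
  have k1: "S1 y * P3 y - S3 y * P1 y = - (y$3 * tA y)"
    by (simp add: S1_def S3_def P1_def P3_def T1_def T2_def T3_def tA_def algebra_simps)
  have k2: "S2 y * P3 y - S3 y * P2 y = - (y$2 * y$3 * y$5)"
    by (simp add: S2_def S3_def P2_def P3_def T2_def T3_def algebra_simps)
  have k3: "P2 y = tB y" by (simp add: P2_def tB_def T2_def T3_def algebra_simps)
  have k4: "P1 y = tC y" by (simp add: P1_def tC_def T1_def T2_def T3_def algebra_simps)
  have g: "(S1 y / P1 y - S3 y / P3 y) / (S2 y / P2 y - S3 y / P3 y)
       = P2 y * (S1 y * P3 y - S3 y * P1 y) / (P1 y * (S2 y * P3 y - S3 y * P2 y))"
  proof -
    have n3: "S2 y * P3 y - S3 y * P2 y \<noteq> 0" unfolding k2 using p by simp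
    have ga: "S1 y / P1 y - S3 y / P3 y = (S1 y * P3 y - S3 y * P1 y) / (P1 y * P3 y)" using n1 by (simp add: field_simps)
    have gb: "S2 y / P2 y - S3 y / P3 y = (S2 y * P3 y - S3 y * P2 y) / (P2 y * P3 y)" using n1 by (simp add: field_simps)
    have gen: "\<And>N1 N2 a b c::real. a \<noteq> 0 \<Longrightarrow> b \<noteq> 0 \<Longrightarrow> c \<noteq> 0 \<Longrightarrow> N2 \<noteq> 0 \<Longrightarrow> (N1 / (a * c)) / (N2 / (b * c)) = b * N1 / (a * N2)"
      by (simp add: field_simps)
    show ?thesis unfolding ga gb by (rule gen[OF n1(1) n1(2) n1(3) n3])
  qed
  show ?thesis unfolding g k1 k2 tau13_alt using p n1 k3 k4 by (simp add: field_simps)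
qed

lemma Delta_SP:
  assumes y: "y \<in> pos_orthant"
  shows "((S1 y / P1 y - S2 y / P2 y) * (1 / P2 y - 1 / P3 y) - (S2 y / P2 y - S3 y / P3 y) * (1 / P1 y - 1 / P2 y))
     = y$1 * y$2 * y$4 / (P1 y * P2 y * P3 y)"
proof -
  have n1: "P1 y \<noteq> 0" "P2 y \<noteq> 0" "P3 y \<noteq> 0" using pos_P[OF y] by auto
  have g: "((S1 y / P1 y - S2 y / P2 y) * (1 / P2 y - 1 / P3 y) - (S2 y / P2 y - S3 y / P3 y) * (1 / P1 y - 1 / P2 y))
     = ((S1 y * P2 y - S2 y * P1 y) * (P3 y - P2 y) - (S2 y * P3 y - S3 y * P2 y) * (P2 y - P1 y)) / (P1 y * P2 y * P2 y * P3 y)"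
    using n1 by (simp add: field_simps)
  have k1: "S1 y * P2 y - S2 y * P1 y = - (y$1 * (y$2 * y$4 + y$3 * y$4 + y$3 * y$5))"
    by (simp add: S1_def S2_def P1_def P2_def T1_def T2_def T3_def algebra_simps)
  have k2: "S2 y * P3 y - S3 y * P2 y = - (y$2 * y$3 * y$5)"
    by (simp add: S2_def S3_def P2_def P3_def T2_def T3_def algebra_simps)
  have k3: "P3 y - P2 y = - (y$2 * (y$5 + y$6))" "P2 y - P1 y = - (y$1 * (y$4 + y$5 + y$6))"
    by (simp_all add: P1_def P2_def P3_def T1_def T2_def T3_def algebra_simps)
  have k4: "- (y$1 * (y$2 * y$4 + y$3 * y$4 + y$3 * y$5)) * (- (y$2 * (y$5 + y$6))) - (- (y$2 * y$3 * y$5)) * (- (y$1 * (y$4 + y$5 + y$6)))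
     = y$1 * y$2 * y$4 * P2 y"
    by (simp add: P2_def T2_def T3_def algebra_simps)
  show ?thesis unfolding g k1 k2 k3 k4 using n1 by (simp add: field_simps)
qed



definition "cc1 x = S1 x / P1 x"
definition "cc2 x = S2 x / P2 x"
definition "cc3 x = S3 x / P3 x"
definition "ww1 x = 1 / P1 x"
definition "ww2 x = 1 / P2 x"
definition "ww3 x = 1 / P3 x"

lemma M3_q: "y \<in> pos_orthant \<Longrightarrow> s * S1 y < 1 \<Longrightarrow> s * S1 y \<noteq> 1 \<and> s * S2 y \<noteq> 1 \<and> s * S3 y \<noteq> 1"
  using lt1_mono[of "S2 y" "S1 y" s] lt1_mono[of "S3 y" "S1 y" s] pos_S[of y] by auto
lemma M4_q: "y \<in> pos_orthant \<Longrightarrow> s * T1 y < 1 \<Longrightarrow> s * T1 y \<noteq> 1 \<and> s * T2 y \<noteq> 1 \<and> s * T3 y \<noteq> 1"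
  using lt1_mono[of "T2 y" "T1 y" s] lt1_mono[of "T3 y" "T1 y" s] pos_T[of y] by auto

lemma M3_cw:
  assumes y: "y \<in> pos_orthant" and s: "s * S1 y < 1"
  shows "cc1 (M3 s y) = cc1 y" "cc2 (M3 s y) = cc2 y" "cc3 (M3 s y) = cc3 y"
    "ww1 (M3 s y) = ww1 y - s * cc1 y" "ww2 (M3 s y) = ww2 y - s * cc2 y" "ww3 (M3 s y) = ww3 y - s * cc3 y"
proof -
  note q = M3_q[OF y s]
  have q': "1 - s * S1 y \<noteq> 0" "1 - s * S2 y \<noteq> 0" "1 - s * S3 y \<noteq> 0" using q by auto
  have n: "P1 y \<noteq> 0" "P2 y \<noteq> 0" "P3 y \<noteq> 0" using pos_P[OF y] by auto
  show "cc1 (M3 s y) = cc1 y" "cc2 (M3 s y) = cc2 y" "cc3 (M3 s y) = cc3 y"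
    "ww1 (M3 s y) = ww1 y - s * cc1 y" "ww2 (M3 s y) = ww2 y - s * cc2 y" "ww3 (M3 s y) = ww3 y - s * cc3 y"
    unfolding cc1_def cc2_def cc3_def ww1_def ww2_def ww3_def M3_S[of s y, OF q[THEN conjunct1] q[THEN conjunct2, THEN conjunct1] q[THEN conjunct2, THEN conjunct2]]
      M3_P[of s y, OF q[THEN conjunct1] q[THEN conjunct2, THEN conjunct1] q[THEN conjunct2, THEN conjunct2]]
    using q' n by (simp_all add: field_simps)
qed

lemma M4_cw:
  assumes y: "y \<in> pos_orthant" and s: "s * T1 y < 1"
  shows "cc1 (M4 s y) = cc1 y - s" "cc2 (M4 s y) = cc2 y - s" "cc3 (M4 s y) = cc3 y - s"
    "ww1 (M4 s y) = ww1 y" "ww2 (M4 s y) = ww2 y" "ww3 (M4 s y) = ww3 y"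
proof -
  note q = M4_q[OF y s]
  have n: "P1 y \<noteq> 0" "P2 y \<noteq> 0" "P3 y \<noteq> 0" using pos_P[OF y] by auto
  show "cc1 (M4 s y) = cc1 y - s" "cc2 (M4 s y) = cc2 y - s" "cc3 (M4 s y) = cc3 y - s"
    "ww1 (M4 s y) = ww1 y" "ww2 (M4 s y) = ww2 y" "ww3 (M4 s y) = ww3 y"
    unfolding cc1_def cc2_def cc3_def ww1_def ww2_def ww3_def M4_S[of s y, OF q[THEN conjunct1] q[THEN conjunct2, THEN conjunct1] q[THEN conjunct2, THEN conjunct2]]
      M4_P[of s y, OF q[THEN conjunct1] q[THEN conjunct2, THEN conjunct1] q[THEN conjunct2, THEN conjunct2]]
    using n by (simp_all add: field_simps)
qed

lemma SX_cw: "a \<noteq> 0 \<Longrightarrow> cc1 (SX a y) = cc1 y \<and> cc2 (SX a y) = cc2 y \<and> cc3 (SX a y) = cc3 y \<and>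
   ww1 (SX a y) = ww1 y / a \<and> ww2 (SX a y) = ww2 y / a \<and> ww3 (SX a y) = ww3 y / a"
  by (simp add: cc1_def cc2_def cc3_def ww1_def ww2_def ww3_def SX_SP)

lemma SY_cw: "a \<noteq> 0 \<Longrightarrow> cc1 (SY a y) = cc1 y / a \<and> cc2 (SY a y) = cc2 y / a \<and> cc3 (SY a y) = cc3 y / a \<and>
   ww1 (SY a y) = ww1 y / a \<and> ww2 (SY a y) = ww2 y / a \<and> ww3 (SY a y) = ww3 y / a"
  by (simp add: cc1_def cc2_def cc3_def ww1_def ww2_def ww3_def SY_SP)

lemma inj_cw:
  assumes y: "y \<in> pos_orthant" and z: "z \<in> pos_orthant"
    and "cc1 y = cc1 z" "cc2 y = cc2 z" "cc3 y = cc3 z" "ww1 y = ww1 z" "ww2 y = ww2 z" "ww3 y = ww3 z"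
  shows "y = z"
proof -
  have ny: "P1 y \<noteq> 0" "P2 y \<noteq> 0" "P3 y \<noteq> 0" using pos_P[OF y] by auto
  have nz: "P1 z \<noteq> 0" "P2 z \<noteq> 0" "P3 z \<noteq> 0" using pos_P[OF z] by auto
  have P: "P1 y = P1 z" "P2 y = P2 z" "P3 y = P3 z" using assms(6-8) ny nz by (simp_all add: ww1_def ww2_def ww3_def)
  have S: "S1 y = S1 z" "S2 y = S2 z" "S3 y = S3 z" using assms(3-5) P ny nz by (simp_all add: cc1_def cc2_def cc3_def field_simps)
  show ?thesis by (rule inj_SP[OF y z S P])
qed

lemma tau13_cw: "y \<in> pos_orthant \<Longrightarrow> tau13 y = (cc1 y - cc3 y) / (cc2 y - cc3 y)"
  by (simp add: tau13_SP cc1_def cc2_def cc3_def)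

lemma cc32: "y \<in> pos_orthant \<Longrightarrow> cc2 y < cc3 y"
proof -
  assume y: "y \<in> pos_orthant"
  have p: "0 < y$2" "0 < y$3" "0 < y$5" using y by (auto simp: orth_iff)
  have n: "0 < P2 y" "0 < P3 y" using pos_P[OF y] by auto
  have k2: "S2 y * P3 y - S3 y * P2 y = - (y$2 * y$3 * y$5)"
    by (simp add: S2_def S3_def P2_def P3_def T2_def T3_def algebra_simps)
  have "S2 y * P3 y < S3 y * P2 y" using k2 p by (smt (verit) mult_pos_pos)
  then show ?thesis using n by (simp add: cc2_def cc3_def field_simps)
qed

lemma Delta_pos: "y \<in> pos_orthant \<Longrightarrow> 0 < (cc1 y - cc2 y) * (ww2 y - ww3 y) - (cc2 y - cc3 y) * (ww1 y - ww2 y)"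
proof -
  assume y: "y \<in> pos_orthant"
  have p: "0 < y$1" "0 < y$2" "0 < y$4" using y by (auto simp: orth_iff)
  have n: "0 < P1 y" "0 < P2 y" "0 < P3 y" using pos_P[OF y] by auto
  show ?thesis unfolding cc1_def cc2_def cc3_def ww1_def ww2_def ww3_def Delta_SP[OF y]
    using p n by simp
qed

lemma cramer0:
  fixes A1 B1 R1 A2 B2 R2 D :: real
  assumes hD: "D = A1 * B2 - A2 * B1" and nz: "D \<noteq> 0"
  shows "((R1 * B2 - R2 * B1) / D) * A1 + ((A1 * R2 - A2 * R1) / D) * B1 = R1"
    "((R1 * B2 - R2 * B1) / D) * A2 + ((A1 * R2 - A2 * R1) / D) * B2 = R2"
  using nz by (simp_all add: field_simps) (simp_all add: hD algebra_simps)

lemmas cramer = cramer0[OF refl]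



definition "bet p x = (cc2 x - cc3 x) / (cc2 p - cc3 p)"
definition "bb p x = 1 + cc3 x - bet p x * cc3 p"
definition "cs1 p x = (cc1 x - cc3 x) / bet p x + cc3 p"
definition "Dl p x = (cs1 p x - cc2 p) * (ww2 p - ww3 p) - (cc2 p - cc3 p) * (ww1 p - ww2 p)"
definition "nu p x = ((ww1 x - ww2 x) * (ww2 p - ww3 p) - (ww2 x - ww3 x) * (ww1 p - ww2 p)) / Dl p x"
definition "ga p x = ((cs1 p x - cc2 p) * (ww2 x - ww3 x) - (cc2 p - cc3 p) * (ww1 x - ww2 x)) / Dl p x"
definition "mu p x = ww3 x - nu p x * cc3 p - ga p x * ww3 p"
definition "aa p x = mu p x / bb p x"
definition "dd p x = nu p x / bet p x - aa p x"
definition "al p x = ga p x / bet p x"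

definition "E4 p x = aa p x * (S1 x + P1 x)"
definition "E5 p x = bb p x * ((P1 x / (1 - aa p x * (S1 x + P1 x)) - P2 x / (1 - aa p x * (S2 x + P2 x))) /
    ((S1 x + P1 x) / (1 - aa p x * (S1 x + P1 x)) - (S2 x + P2 x) / (1 - aa p x * (S2 x + P2 x))))"
definition "E6 p x = dd p x * ((S1 x + P1 x - bb p x * P1 x) / (1 - aa p x * (S1 x + P1 x)))"

definition "st6 p x = SX (al p x) (SY (bet p x) (M3 (dd p x) (M4 (bb p x) (M3 (aa p x) (M4 (-1) x)))))"

definition "good p x \<longleftrightarrow> x \<in> pos_orthant \<and> 0 < bet p x \<and> Dl p x \<noteq> 0 \<and> 0 < ga p x \<and> 0 < bb p x
   \<and> E4 p x < 1 \<and> E5 p x < 1 \<and> E6 p x < 1"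

lemma chain:
  assumes sol: "is_solution \<tau>" and p: "p \<in> pos_orthant" and g: "good p x"
  shows "st6 p x \<in> pos_orthant \<and> \<tau> (st6 p x) = \<tau> x \<and>
     cc1 (st6 p x) = cs1 p x \<and> cc2 (st6 p x) = cc2 p \<and> cc3 (st6 p x) = cc3 p \<and>
     ww1 (st6 p x) = ww1 p \<and> ww2 (st6 p x) = ww2 p \<and> ww3 (st6 p x) = ww3 p"
proof -
  have x: "x \<in> pos_orthant" and bet: "0 < bet p x" and Dl: "Dl p x \<noteq> 0" and ga: "0 < ga p x"
    and bb: "0 < bb p x" and e4: "E4 p x < 1" and e5: "E5 p x < 1" and e6: "E6 p x < 1"
    using g by (auto simp: good_def)
  define x1 where "x1 = M4 (-1) x"
  define x2 where "x2 = M3 (aa p x) x1"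
  define x3 where "x3 = M4 (bb p x) x2"
  define x4 where "x4 = M3 (dd p x) x3"
  define x5 where "x5 = SY (bet p x) x4"
  define x6 where "x6 = SX (al p x) x5"
  have st: "st6 p x = x6" by (simp add: st6_def x1_def x2_def x3_def x4_def x5_def x6_def)
  have v1: "(-1) * T1 x < 1" using pos_T[OF x] by simp
  have o1: "x1 \<in> pos_orthant" unfolding x1_def by (rule M4_orth[OF x v1])
  have t1: "\<tau> x1 = \<tau> x" unfolding x1_def by (rule M4_inv[OF sol x v1])
  note cw1 = M4_cw[OF x v1, folded x1_def]
  note q1 = M4_q[OF x v1]
  have S1x1: "S1 x1 = S1 x + P1 x" "S2 x1 = S2 x + P2 x"
    unfolding x1_def using M4_S[of "-1" x] q1 by auto
  have P1x1: "P1 x1 = P1 x" "P2 x1 = P2 x" unfolding x1_def using M4_P[of "-1" x] q1 by auto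
  have v2: "aa p x * S1 x1 < 1" using e4 S1x1 by (simp add: E4_def)
  have o2: "x2 \<in> pos_orthant" unfolding x2_def by (rule M3_orth[OF o1 v2])
  have t2: "\<tau> x2 = \<tau> x1" unfolding x2_def by (rule M3_inv[OF sol o1 v2])
  note cw2 = M3_cw[OF o1 v2, folded x2_def]
  note q2 = M3_q[OF o1 v2]
  have S1x2: "S1 x2 = (S1 x + P1 x) / (1 - aa p x * (S1 x + P1 x))" "S2 x2 = (S2 x + P2 x) / (1 - aa p x * (S2 x + P2 x))"
    unfolding x2_def using M3_S[of "aa p x" x1] q2 S1x1 by auto
  have P1x2: "P1 x2 = P1 x / (1 - aa p x * (S1 x + P1 x))" "P2 x2 = P2 x / (1 - aa p x * (S2 x + P2 x))"
    unfolding x2_def using M3_P[of "aa p x" x1] q2 S1x1 P1x1 by auto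
  have v3: "bb p x * T1 x2 < 1" using e5 unfolding E5_def T1_SP[OF o2] S1x2 P1x2 .
  have o3: "x3 \<in> pos_orthant" unfolding x3_def by (rule M4_orth[OF o2 v3])
  have t3: "\<tau> x3 = \<tau> x2" unfolding x3_def by (rule M4_inv[OF sol o2 v3])
  note cw3 = M4_cw[OF o2 v3, folded x3_def]
  note q3 = M4_q[OF o2 v3]
  have S1x3: "S1 x3 = (S1 x + P1 x - bb p x * P1 x) / (1 - aa p x * (S1 x + P1 x))"
    unfolding x3_def using M4_S[of "bb p x" x2] q3 S1x2 P1x2 by (simp add: diff_divide_distrib)
  have v4: "dd p x * S1 x3 < 1" using e6 S1x3 by (simp add: E6_def)
  have o4: "x4 \<in> pos_orthant" unfolding x4_def by (rule M3_orth[OF o3 v4])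
  have t4: "\<tau> x4 = \<tau> x3" unfolding x4_def by (rule M3_inv[OF sol o3 v4])
  note cw4 = M3_cw[OF o3 v4, folded x4_def]
  have al: "0 < al p x" using ga bet by (simp add: al_def)
  have o5: "x5 \<in> pos_orthant" unfolding x5_def by (rule SY_orth[OF o4 bet])
  have t5: "\<tau> x5 = \<tau> x4" unfolding x5_def by (rule SY_inv[OF sol o4 bet])
  have cw5: "cc1 x5 = cc1 x4 / bet p x \<and> cc2 x5 = cc2 x4 / bet p x \<and> cc3 x5 = cc3 x4 / bet p x \<and>
   ww1 x5 = ww1 x4 / bet p x \<and> ww2 x5 = ww2 x4 / bet p x \<and> ww3 x5 = ww3 x4 / bet p x"
    unfolding x5_def using bet by (intro SY_cw) simp
  have o6: "x6 \<in> pos_orthant" unfolding x6_def by (rule SX_orth[OF o5 al])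
  have t6: "\<tau> x6 = \<tau> x5" unfolding x6_def by (rule SX_inv[OF sol o5 al])
  have cw6: "cc1 x6 = cc1 x5 \<and> cc2 x6 = cc2 x5 \<and> cc3 x6 = cc3 x5 \<and>
   ww1 x6 = ww1 x5 / al p x \<and> ww2 x6 = ww2 x5 / al p x \<and> ww3 x6 = ww3 x5 / al p x"
    unfolding x6_def using al by (intro SX_cw) simp
  have d23: "cc2 p - cc3 p \<noteq> 0" using cc32[OF p] by simp
  have cA1: "cc1 x + 1 - bb p x = bet p x * cs1 p x"
    using bet unfolding bb_def cs1_def by (simp add: distrib_left)
  have cA23: "cc2 x + 1 - bb p x = bet p x * cc2 p" "cc3 x + 1 - bb p x = bet p x * cc3 p"
    using bet d23 cc32[OF x] by (simp_all add: bb_def bet_def field_simps)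
  note cA = cA1 cA23
  note cr = cramer[of "cs1 p x - cc2 p" "ww2 p - ww3 p" "cc2 p - cc3 p" "ww1 p - ww2 p" "ww1 x - ww2 x" "ww2 x - ww3 x"]
  have cr1: "nu p x * (cs1 p x - cc2 p) + ga p x * (ww1 p - ww2 p) = ww1 x - ww2 x"
    "nu p x * (cc2 p - cc3 p) + ga p x * (ww2 p - ww3 p) = ww2 x - ww3 x"
    using cr Dl unfolding nu_def ga_def Dl_def by auto
  have lin: "mu p x + nu p x * cs1 p x + ga p x * ww1 p = ww1 x"
    "mu p x + nu p x * cc2 p + ga p x * ww2 p = ww2 x"
    "mu p x + nu p x * cc3 p + ga p x * ww3 p = ww3 x"
    using cr1 unfolding mu_def by (simp_all add: algebra_simps)
  have am: "aa p x * bb p x = mu p x" using bb by (simp add: aa_def)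
  have dn: "(aa p x + dd p x) * bet p x = nu p x" using bet by (simp add: dd_def field_simps)
  have ab: "al p x * bet p x = ga p x" using bet by (simp add: al_def)
  have W: "W - aa p x * (C + 1) - dd p x * (C + 1 - bb p x) = W - (mu p x + nu p x * cs)"
    if "C + 1 - bb p x = bet p x * cs" for W C cs :: real
  proof -
    have "C + 1 = bet p x * cs + bb p x" using that by simp
    then have "W - aa p x * (C + 1) - dd p x * (C + 1 - bb p x) = W - aa p x * bb p x - (aa p x + dd p x) * bet p x * cs"
      using that by (simp add: algebra_simps)
    then show ?thesis using am dn by simp
  qed
  have fw: "\<And>W wp::real. W = ga p x * wp \<Longrightarrow> W / bet p x / al p x = wp"
    using ab ga bet al by (auto simp: field_simps)
  have res_c: "cc1 x6 = cs1 p x" "cc2 x6 = cc2 p" "cc3 x6 = cc3 p"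
    using cw6 cw5 cw4 cw3 cw2 cw1 cA bet by (auto simp: field_simps)
  have res_w: "ww1 x6 = ww1 p" "ww2 x6 = ww2 p" "ww3 x6 = ww3 p"
  proof -
    have "ww1 x6 = (ww1 x - aa p x * (cc1 x + 1) - dd p x * (cc1 x + 1 - bb p x)) / bet p x / al p x"
      using cw6 cw5 cw4 cw3 cw2 cw1 by simp
    also have "\<dots> = ww1 p" by (rule fw) (use W[OF cA(1)] lin(1) in \<open>simp add: algebra_simps\<close>)
    finally show "ww1 x6 = ww1 p" .
    have "ww2 x6 = (ww2 x - aa p x * (cc2 x + 1) - dd p x * (cc2 x + 1 - bb p x)) / bet p x / al p x"
      using cw6 cw5 cw4 cw3 cw2 cw1 by simp
    also have "\<dots> = ww2 p" by (rule fw) (use W[OF cA(2)] lin(2) in \<open>simp add: algebra_simps\<close>)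
    finally show "ww2 x6 = ww2 p" .
    have "ww3 x6 = (ww3 x - aa p x * (cc3 x + 1) - dd p x * (cc3 x + 1 - bb p x)) / bet p x / al p x"
      using cw6 cw5 cw4 cw3 cw2 cw1 by simp
    also have "\<dots> = ww3 p" by (rule fw) (use W[OF cA(3)] lin(3) in \<open>simp add: algebra_simps\<close>)
    finally show "ww3 x6 = ww3 p" .
  qed
  show ?thesis unfolding st using o6 t6 t5 t4 t3 t2 t1 res_c res_w by simp
qed



lemma isCont_nth6[continuous_intros]: "isCont (\<lambda>x::real^6. x $ i) p"
  by (simp add: bounded_linear_vec_nth linear_continuous_at)

lemma isCont_SP[continuous_intros]: "isCont S1 p" "isCont S2 p" "isCont S3 p" "isCont P1 p" "isCont P2 p" "isCont P3 p"
  unfolding S1_def[abs_def] S2_def[abs_def] S3_def[abs_def] P1_def[abs_def] P2_def[abs_def] P3_def[abs_def]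
    T1_def T2_def T3_def
  by (auto intro!: continuous_intros)

lemma isCont_cw:
  assumes p: "p \<in> pos_orthant"
  shows "isCont cc1 p" "isCont cc2 p" "isCont cc3 p" "isCont ww1 p" "isCont ww2 p" "isCont ww3 p"
proof -
  have n: "P1 p \<noteq> 0" "P2 p \<noteq> 0" "P3 p \<noteq> 0" using pos_P[OF p] by auto
  show "isCont cc1 p" "isCont cc2 p" "isCont cc3 p" "isCont ww1 p" "isCont ww2 p" "isCont ww3 p"
    unfolding cc1_def[abs_def] cc2_def[abs_def] cc3_def[abs_def] ww1_def[abs_def] ww2_def[abs_def] ww3_def[abs_def]
    using n by (auto intro!: continuous_intros)
qed

lemma ev_less: "isCont f p \<Longrightarrow> f p < (c::real) \<Longrightarrow> eventually (\<lambda>x. f x < c) (nhds p)"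
proof -
  assume f: "isCont f p" and l: "f p < c"
  have "eventually (\<lambda>x. f x < c) (at p)"
    using f l by (simp add: isCont_def order_tendstoD(2))
  then have "eventually (\<lambda>x. x \<noteq> p \<longrightarrow> x \<in> UNIV \<longrightarrow> f x < c) (nhds p)"
    by (simp add: eventually_at_filter)
  then show ?thesis by eventually_elim (use l in auto)
qed

lemma ev_greater: "isCont f p \<Longrightarrow> (c::real) < f p \<Longrightarrow> eventually (\<lambda>x. c < f x) (nhds p)"
proof -
  assume f: "isCont f p" and l: "c < f p"
  have "eventually (\<lambda>x. c < f x) (at p)"
    using f l by (simp add: isCont_def order_tendstoD(1))
  then have "eventually (\<lambda>x. x \<noteq> p \<longrightarrow> x \<in> UNIV \<longrightarrow> c < f x) (nhds p)"
    by (simp add: eventually_at_filter)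
  then show ?thesis by eventually_elim (use l in auto)
qed

context
  fixes p :: "real^6"
  assumes p: "p \<in> pos_orthant"
begin

lemma d23p: "cc2 p - cc3 p \<noteq> 0" using cc32[OF p] by simp

lemma vals: "bet p p = 1" "bb p p = 1" "cs1 p p = cc1 p" "Dl p p > 0" "nu p p = 0" "ga p p = 1"
  "mu p p = 0" "aa p p = 0" "dd p p = 0"
proof -
  show b: "bet p p = 1" using d23p by (simp add: bet_def)
  show "bb p p = 1" using b by (simp add: bb_def)
  show c: "cs1 p p = cc1 p" using b by (simp add: cs1_def)
  show D: "Dl p p > 0" using Delta_pos[OF p] by (simp add: Dl_def c)
  show n: "nu p p = 0" by (simp add: nu_def algebra_simps)
  show g: "ga p p = 1" using D by (simp add: ga_def Dl_def c)
  show m: "mu p p = 0" using n g by (simp add: mu_def)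
  show a: "aa p p = 0" using m by (simp add: aa_def)
  show "dd p p = 0" using n a by (simp add: dd_def)
qed

lemma conts: "isCont (bet p) p" "isCont (bb p) p" "isCont (cs1 p) p" "isCont (Dl p) p" "isCont (nu p) p"
  "isCont (ga p) p" "isCont (mu p) p" "isCont (aa p) p" "isCont (dd p) p"
proof -
  note cw = isCont_cw[OF p]
  show b: "isCont (bet p) p" unfolding bet_def[abs_def] using cw d23p by (auto intro!: continuous_intros)
  show bb: "isCont (bb p) p" unfolding bb_def[abs_def] using cw b by (auto intro!: continuous_intros)
  show c: "isCont (cs1 p) p" unfolding cs1_def[abs_def] using cw b vals by (auto intro!: continuous_intros)
  show D: "isCont (Dl p) p" unfolding Dl_def[abs_def] using cw c by (auto intro!: continuous_intros)
  show n: "isCont (nu p) p" unfolding nu_def[abs_def] using cw D vals by (auto intro!: continuous_intros)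
  show g: "isCont (ga p) p" unfolding ga_def[abs_def] using cw D c vals by (auto intro!: continuous_intros)
  show m: "isCont (mu p) p" unfolding mu_def[abs_def] using cw n g by (auto intro!: continuous_intros)
  show a: "isCont (aa p) p" unfolding aa_def[abs_def] using m bb vals by (auto intro!: continuous_intros)
  show "isCont (dd p) p" unfolding dd_def[abs_def] using n b a vals by (auto intro!: continuous_intros)
qed

lemma E_vals: "E4 p p < 1" "E5 p p < 1" "E6 p p < 1"
proof -
  show "E4 p p < 1" using vals by (simp add: E4_def)
  show "E6 p p < 1" using vals by (simp add: E6_def)
  have s: "0 < S1 p - S2 p" using pos_S[OF p] by simp
  have q: "0 < P1 p - P2 p" using pos_P[OF p] by simp
  have "E5 p p = (P1 p - P2 p) / ((P1 p - P2 p) + (S1 p - S2 p))" using vals by (simp add: E5_def algebra_simps)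
  then show "E5 p p < 1" using s q by simp
qed

lemma E_conts: "isCont (E4 p) p" "isCont (E5 p) p" "isCont (E6 p) p"
proof -
  note c = conts
  have s: "0 < S1 p - S2 p" using pos_S[OF p] by simp
  have q: "0 < P1 p - P2 p" using pos_P[OF p] by simp
  show "isCont (E4 p) p" unfolding E4_def[abs_def] using c by (auto intro!: continuous_intros)
  show "isCont (E6 p) p" unfolding E6_def[abs_def] using c vals by (auto intro!: continuous_intros)
  show "isCont (E5 p) p" unfolding E5_def[abs_def] using c vals s q by (auto intro!: continuous_intros)
qed

lemma ev_good: "eventually (good p) (nhds p)"
proof -
  note c = conts and v = vals
  have "eventually (\<lambda>x. x \<in> pos_orthant) (nhds p)" by (rule eventually_nhds_in_open[OF open_orth p])
  moreover have "eventually (\<lambda>x. 0 < bet p x) (nhds p)" by (rule ev_greater) (use c v in auto)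
  moreover have "eventually (\<lambda>x. 0 < Dl p x) (nhds p)" by (rule ev_greater) (use c v in auto)
  moreover have "eventually (\<lambda>x. 0 < ga p x) (nhds p)" by (rule ev_greater) (use c v in auto)
  moreover have "eventually (\<lambda>x. 0 < bb p x) (nhds p)" by (rule ev_greater) (use c v in auto)
  moreover have "eventually (\<lambda>x. E4 p x < 1) (nhds p)" by (rule ev_less) (use E_conts E_vals in auto)
  moreover have "eventually (\<lambda>x. E5 p x < 1) (nhds p)" by (rule ev_less) (use E_conts E_vals in auto)
  moreover have "eventually (\<lambda>x. E6 p x < 1) (nhds p)" by (rule ev_less) (use E_conts E_vals in auto)
  ultimately show ?thesis unfolding good_def[abs_def]
    by eventually_elim auto
qed

end



theorem mainTheorem2:
  shows "is_solution tau13 \<and>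
    (\<forall>\<tau>. is_solution \<tau> \<longrightarrow>
       (\<forall>p\<in>pos_orthant. \<exists>U. open U \<and> p \<in> U \<and> U \<subseteq> pos_orthant \<and>
          (\<exists>F :: real \<Rightarrow> real. \<forall>x\<in>U. \<tau> x = F (tau13 x))))"
proof (intro conjI allI impI ballI)
  show "is_solution tau13" unfolding is_solution_def using tau13_smooth tau13_PDE by blast
next
  fix \<tau> :: "real^6 \<Rightarrow> real" and p
  assume sol: "is_solution \<tau>" and p: "p \<in> pos_orthant"
  obtain U where U: "open U" "p \<in> U" "\<And>x. x \<in> U \<Longrightarrow> good p x"
    using ev_good[OF p] unfolding eventually_nhds by blast
  define Q where "Q \<theta> y \<longleftrightarrow> y \<in> pos_orthant \<and> cc1 y = (cc2 p - cc3 p) * \<theta> + cc3 p \<and> cc2 y = cc2 p \<and> cc3 y = cc3 p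
     \<and> ww1 y = ww1 p \<and> ww2 y = ww2 p \<and> ww3 y = ww3 p" for \<theta> y
  define F where "F \<theta> = \<tau> (SOME y. Q \<theta> y)" for \<theta>
  have "\<forall>x\<in>U. \<tau> x = F (tau13 x)"
  proof
    fix x assume x: "x \<in> U"
    have g: "good p x" by (rule U(3)[OF x])
    then have xo: "x \<in> pos_orthant" by (simp add: good_def)
    have bet: "0 < bet p x" using g by (simp add: good_def)
    note ch = chain[OF sol p g]
    have cs: "cs1 p x = (cc2 p - cc3 p) * tau13 x + cc3 p"
      unfolding cs1_def tau13_cw[OF xo] bet_def using cc32[OF xo] cc32[OF p] by (simp add: field_simps)
    have q6: "Q (tau13 x) (st6 p x)" unfolding Q_def using ch cs by simp
    then have qs: "Q (tau13 x) (SOME y. Q (tau13 x) y)" by (rule someI)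
    have "(SOME y. Q (tau13 x) y) = st6 p x"
      by (rule inj_cw) (use qs q6 in \<open>simp_all add: Q_def\<close>)
    then show "\<tau> x = F (tau13 x)" unfolding F_def using ch by simp
  qed
  moreover have "U \<subseteq> pos_orthant" using U(3) by (auto simp: good_def)
  ultimately show "\<exists>U. open U \<and> p \<in> U \<and> U \<subseteq> pos_orthant \<and> (\<exists>F :: real \<Rightarrow> real. \<forall>x\<in>U. \<tau> x = F (tau13 x))"
    using U by blast
qed


end
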